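(* The category of $\mathcal{D}$-coalgebras of the comonad $(\mathcal{D},\delta,\varepsilon)$ on $\mathsf{CLAC}$ is equivalent to the category of Cartesian differential categories and strict Cartesian differential functors between them. Explicitly: a Cartesian differential category $\mathbb{X}$ with combinator $\mathsf{D}$ corresponds to the coalgebra $(\mathbb{X},\omega^{\mathsf{D}})$ with $\omega^{\mathsf{D}}(f)_0=f$ and $\omega^{\mathsf{D}}(f)_n=\mathsf{D}^n[f]$, and a coalgebra $(\mathbb{X},\omega)$ corresponds to the Cartesian differential category with combinator $\mathsf{D}^\omega[f]=\omega(f)_1$; these assignments are mutually inverse, and coalgebra morphisms are exactly strict Cartesian differential functors.
   Context: Composition is written in diagrammatic order: $fg$ means first $f$ then $g$. A left additive category is a category whose hom-sets are commutative monoids (with $+$, $0$) such that $f(g+h)=fg+fh$ and $f0=0$; a map $h$ is additive if $(f+g)h=fh+gh$ and $0h=0$. A Cartesian left additive category is a left additive category with finite products in which all projections are additive. $\mathsf{CLAC}$ is the category of Cartesian left additive categories and functors preserving finite products strictly ($\mathsf{F}(A\times B)=\mathsf{F}A\times\mathsf{F}B$, terminal object preserved, $\mathsf{F}(\pi_j)=\pi_j$) and preserving $+$ and $0$ (strict Cartesian left additive functors). A Cartesian differential category is a Cartesian left additive category with a combinator $\mathsf{D}$ sending $f:A\to B$ to $\mathsf{D}[f]:A\times A\to B$ such that: [CD.1] $\mathsf{D}[f+g]=\mathsf{D}[f]+\mathsf{D}[g]$, $\mathsf{D}[0]=0$; [CD.2] $(1\times(\pi_0+\pi_1))\mathsf{D}[f]=(1\times\pi_0)\mathsf{D}[f]+(1\times\pi_1)\mathsf{D}[f]$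 (with $1\times(\pi_0+\pi_1),1\times\pi_j:A\times(A\times A)\to A\times A$) and $\langle 1,0\rangle\mathsf{D}[f]=0$; [CD.3] $\mathsf{D}[1]=\pi_1$, $\mathsf{D}[\pi_j]=\pi_1\pi_j$; [CD.4] $\mathsf{D}[\langle f,g\rangle]=\langle\mathsf{D}[f],\mathsf{D}[g]\rangle$; [CD.5] $\mathsf{D}[fg]=\langle\pi_0f,\mathsf{D}[f]\rangle\mathsf{D}[g]$; [CD.6] $\ell\,\mathsf{D}[\mathsf{D}[f]]=\mathsf{D}[f]$ where $\ell=\langle1,0\rangle\times\langle0,1\rangle:A\times A\to(A\times A)\times(A\times A)$; [CD.7] $c\,\mathsf{D}[\mathsf{D}[f]]=\mathsf{D}[\mathsf{D}[f]]$ where $c=\langle\langle\pi_0\pi_0,\pi_1\pi_0\rangle,\langle\pi_0\pi_1,\pi_1\pi_1\rangle\rangle$ on $(A\times A)\times(A\times A)$ swaps the two middle components. A strict Cartesian differential functor is a strict Cartesian left additive functor with $\mathsf{F}(\mathsf{D}[f])=\mathsf{D}[\mathsf{F}(f)]$. Pre-$\mathsf{D}$-sequences: in a category $\mathbb{X}$ with finite products put $\mathsf{P}(A)=A\times A$, $\mathsf{P}(f)=f\times f$. A pre-$\mathsf{D}$-sequence $f_\bullet:A\to B$ is a sequence $(f_0,f_1,\dots)$ with $f_n:\mathsf{P}^n(A)\to B$. For $h:A'\to A$, $k:B\to C$: $(h\cdot f_\bullet)_n=\mathsf{P}^n(h)f_n$, $(f_\bullet\cdot k)_n=f_nk$. Tangent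 $\mathsf{T}(f_\bullet):\mathsf{P}(A)\to\mathsf{P}(B)$, $\mathsf{T}(f_\bullet)_n=\langle\mathsf{P}^n(\pi_0)f_n,f_{n+1}\rangle$; differential $\mathsf{D}[f_\bullet]:\mathsf{P}(A)\to B$, $\mathsf{D}[f_\bullet]_n=f_{n+1}$. Identity $i_\bullet$: $i_0=1$, $i_n=\pi_1\cdots\pi_1$ ($n$ times). Composition $(f_\bullet\ast g_\bullet)_n=\mathsf{T}^n(f_\bullet)_0\,g_n$. Products: projections $i_\bullet\cdot\pi_j$, pairing $\langle f_\bullet,g_\bullet\rangle_n=\langle f_n,g_n\rangle$; additive structure pointwise ($0_n=0$, $(f_\bullet+g_\bullet)_n=f_n+g_n$). A $\mathsf{D}$-sequence (in a Cartesian left additive category) is a pre-$\mathsf{D}$-sequence with, for all $n$: [DS.1] $\langle1,0\rangle\cdot\mathsf{D}^{n+1}[f_\bullet]=0_\bullet$; [DS.2] $(1\times(\pi_0+\pi_1))\cdot\mathsf{D}^{n+1}[f_\bullet]=((1\times\pi_0)\cdot\mathsf{D}^{n+1}[f_\bullet])+((1\times\pi_1)\cdot\mathsf{D}^{n+1}[f_\bullet])$; [DS.3] $\ell\cdot\mathsf{D}^{n+2}[f_\bullet]=\mathsf{D}^{n+1}[f_\bullet]$; [DS.4] $c\cdot\mathsf{D}^{n+2}[f_\bullet]=\mathsf{D}^{n+2}[f_\bullet]$ (with $\langle1,0\rangle,1\times\pi_j,\ell,c$ the maps above for the object $\mathsf{P}^n(A)$). $\mathcal{D}[\mathbb{X}]$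 is the category of objects of $\mathbb{X}$ and $\mathsf{D}$-sequences, with identity $i_\bullet$, composition $\ast$, and the products and addition above. The comonad: $\mathcal{D}[\mathsf{F}](f_\bullet)_n=\mathsf{F}(f_n)$; $\varepsilon:\mathcal{D}[\mathbb{X}]\to\mathbb{X}$ is the identity on objects and $f_\bullet\mapsto f_0$; $\delta:\mathcal{D}[\mathbb{X}]\to\mathcal{D}[\mathcal{D}[\mathbb{X}]]$ is the identity on objects and sends $f_\bullet$ to the sequence with $0$-th term $f_\bullet$ and $n$-th term $\mathsf{D}^n[f_\bullet]$. A $\mathcal{D}$-coalgebra is $(\mathbb{X},\omega)$ with $\omega:\mathbb{X}\to\mathcal{D}[\mathbb{X}]$ a strict Cartesian left additive functor with $\omega\varepsilon=1$ and $\omega\delta=\omega\,\mathcal{D}[\omega]$; a morphism $(\mathbb{X},\omega)\to(\mathbb{Y},\omega')$ is a strict Cartesian left additive functor $\mathsf{F}$ with $\mathsf{F}\omega'=\omega\,\mathcal{D}[\mathsf{F}]$. *)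

theory Defs
  imports Main
begin

section \<open>Categories with chosen finite products and left additive structure\<close>

text \<open>Composition is written in diagrammatic order: ccmp X f g = fg (first f, then g).\<close>

record ('o, 'm) clac =
  cOb   :: "'o set"
  cArr  :: "'m set"
  cdom  :: "'m \<Rightarrow> 'o"
  ccod  :: "'m \<Rightarrow> 'o"
  ccmp  :: "'m \<Rightarrow> 'm \<Rightarrow> 'm"
  cid   :: "'o \<Rightarrow> 'm"
  cprd  :: "'o \<Rightarrow> 'o \<Rightarrow> 'o"
  ctrm  :: "'o"
  cpr0  :: "'o \<Rightarrow> 'o \<Rightarrow> 'm"
  cpr1  :: "'o \<Rightarrow> 'o \<Rightarrow> 'm"
  cpair :: "'m \<Rightarrow> 'm \<Rightarrow> 'm"
  cadd  :: "'m \<Rightarrow> 'm \<Rightarrow> 'm"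
  czero :: "'o \<Rightarrow> 'o \<Rightarrow> 'm"

definition Hom :: "('o, 'm, 'z) clac_scheme \<Rightarrow> 'o \<Rightarrow> 'o \<Rightarrow> 'm set" where
  "Hom X A B = {f \<in> cArr X. cdom X f = A \<and> ccod X f = B}"

definition is_category :: "('o, 'm, 'z) clac_scheme \<Rightarrow> bool" where
  "is_category X \<longleftrightarrow>
     (\<forall>f \<in> cArr X. cdom X f \<in> cOb X \<and> ccod X f \<in> cOb X) \<and>
     (\<forall>A \<in> cOb X. cid X A \<in> Hom X A A) \<and>
     (\<forall>A \<in> cOb X. \<forall>B \<in> cOb X. \<forall>C \<in> cOb X. \<forall>f \<in> Hom X A B. \<forall>g \<in> Hom X B C.
        ccmp X f g \<in> Hom X A C) \<and>
     (\<forall>A \<in> cOb X. \<forall>B \<in> cOb X. \<forall>C \<in> cOb X. \<forall>E \<in> cOb X.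
        \<forall>f \<in> Hom X A B. \<forall>g \<in> Hom X B C. \<forall>h \<in> Hom X C E.
        ccmp X (ccmp X f g) h = ccmp X f (ccmp X g h)) \<and>
     (\<forall>A \<in> cOb X. \<forall>B \<in> cOb X. \<forall>f \<in> Hom X A B.
        ccmp X (cid X A) f = f \<and> ccmp X f (cid X B) = f)"

definition has_finite_products :: "('o, 'm, 'z) clac_scheme \<Rightarrow> bool" where
  "has_finite_products X \<longleftrightarrow>
     ctrm X \<in> cOb X \<and>
     (\<forall>A \<in> cOb X. \<exists>!h. h \<in> Hom X A (ctrm X)) \<and>
     (\<forall>A \<in> cOb X. \<forall>B \<in> cOb X.
        cprd X A B \<in> cOb X \<and>
        cpr0 X A B \<in> Hom X (cprd X A B) A \<and>
        cpr1 X A B \<in> Hom X (cprd X A B) B \<and>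
        (\<forall>C \<in> cOb X. \<forall>f \<in> Hom X C A. \<forall>g \<in> Hom X C B.
           cpair X f g \<in> Hom X C (cprd X A B) \<and>
           ccmp X (cpair X f g) (cpr0 X A B) = f \<and>
           ccmp X (cpair X f g) (cpr1 X A B) = g) \<and>
        (\<forall>C \<in> cOb X. \<forall>h \<in> Hom X C (cprd X A B).
           h = cpair X (ccmp X h (cpr0 X A B)) (ccmp X h (cpr1 X A B))))"

definition is_left_additive :: "('o, 'm, 'z) clac_scheme \<Rightarrow> bool" where
  "is_left_additive X \<longleftrightarrow>
     (\<forall>A \<in> cOb X. \<forall>B \<in> cOb X.
        czero X A B \<in> Hom X A B \<and>
        (\<forall>f \<in> Hom X A B. \<forall>g \<in> Hom X A B.
           cadd X f g \<in> Hom X A B \<and> cadd X f g = cadd X g f) \<and>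
        (\<forall>f \<in> Hom X A B. \<forall>g \<in> Hom X A B. \<forall>h \<in> Hom X A B.
           cadd X (cadd X f g) h = cadd X f (cadd X g h)) \<and>
        (\<forall>f \<in> Hom X A B. cadd X f (czero X A B) = f)) \<and>
     (\<forall>A \<in> cOb X. \<forall>B \<in> cOb X. \<forall>C \<in> cOb X. \<forall>f \<in> Hom X A B.
        (\<forall>g \<in> Hom X B C. \<forall>h \<in> Hom X B C.
           ccmp X f (cadd X g h) = cadd X (ccmp X f g) (ccmp X f h)) \<and>
        ccmp X f (czero X B C) = czero X A C)"

definition is_additive_map :: "('o, 'm, 'z) clac_scheme \<Rightarrow> 'o \<Rightarrow> 'o \<Rightarrow> 'm \<Rightarrow> bool" where
  "is_additive_map X B C h \<longleftrightarrow>
     (\<forall>A \<in> cOb X. (\<forall>f \<in> Hom X A B. \<forall>g \<in> Hom X A B.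
          ccmp X (cadd X f g) h = cadd X (ccmp X f h) (ccmp X g h)) \<and>
        ccmp X (czero X A B) h = czero X A C)"

definition is_clac :: "('o, 'm, 'z) clac_scheme \<Rightarrow> bool" where
  "is_clac X \<longleftrightarrow> is_category X \<and> has_finite_products X \<and> is_left_additive X \<and>
     (\<forall>A \<in> cOb X. \<forall>B \<in> cOb X.
        is_additive_map X (cprd X A B) A (cpr0 X A B) \<and>
        is_additive_map X (cprd X A B) B (cpr1 X A B))"

definition strict_cla_functor ::
  "('o, 'm, 'z) clac_scheme \<Rightarrow> ('p, 'n, 'y) clac_scheme \<Rightarrow> ('o \<Rightarrow> 'p) \<Rightarrow> ('m \<Rightarrow> 'n) \<Rightarrow> bool" where
  "strict_cla_functor X Y Fo Fm \<longleftrightarrow>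
     (\<forall>A \<in> cOb X. Fo A \<in> cOb Y) \<and>
     (\<forall>A \<in> cOb X. \<forall>B \<in> cOb X. \<forall>f \<in> Hom X A B. Fm f \<in> Hom Y (Fo A) (Fo B)) \<and>
     (\<forall>A \<in> cOb X. Fm (cid X A) = cid Y (Fo A)) \<and>
     (\<forall>A \<in> cOb X. \<forall>B \<in> cOb X. \<forall>C \<in> cOb X. \<forall>f \<in> Hom X A B. \<forall>g \<in> Hom X B C.
        Fm (ccmp X f g) = ccmp Y (Fm f) (Fm g)) \<and>
     Fo (ctrm X) = ctrm Y \<and>
     (\<forall>A \<in> cOb X. \<forall>B \<in> cOb X.
        Fo (cprd X A B) = cprd Y (Fo A) (Fo B) \<and>
        Fm (cpr0 X A B) = cpr0 Y (Fo A) (Fo B) \<and>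
        Fm (cpr1 X A B) = cpr1 Y (Fo A) (Fo B) \<and>
        Fm (czero X A B) = czero Y (Fo A) (Fo B) \<and>
        (\<forall>f \<in> Hom X A B. \<forall>g \<in> Hom X A B. Fm (cadd X f g) = cadd Y (Fm f) (Fm g)))"

definition Pob :: "('o, 'm, 'z) clac_scheme \<Rightarrow> 'o \<Rightarrow> 'o" where
  "Pob X A = cprd X A A"

definition Pnob :: "('o, 'm, 'z) clac_scheme \<Rightarrow> nat \<Rightarrow> 'o \<Rightarrow> 'o" where
  "Pnob X n A = (Pob X ^^ n) A"

definition Pmap :: "('o, 'm, 'z) clac_scheme \<Rightarrow> 'm \<Rightarrow> 'm" where
  "Pmap X h = (let A = cdom X h in
      cpair X (ccmp X (cpr0 X A A) h) (ccmp X (cpr1 X A A) h))"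

definition Pnmap :: "('o, 'm, 'z) clac_scheme \<Rightarrow> nat \<Rightarrow> 'm \<Rightarrow> 'm" where
  "Pnmap X n h = (Pmap X ^^ n) h"

definition one_times :: "('o, 'm, 'z) clac_scheme \<Rightarrow> 'o \<Rightarrow> 'm \<Rightarrow> 'm" where
  "one_times X A h = cpair X (cpr0 X A (Pob X A)) (ccmp X (cpr1 X A (Pob X A)) h)"

definition inj0 :: "('o, 'm, 'z) clac_scheme \<Rightarrow> 'o \<Rightarrow> 'm" where
  "inj0 X A = cpair X (cid X A) (czero X A A)"

definition inj1 :: "('o, 'm, 'z) clac_scheme \<Rightarrow> 'o \<Rightarrow> 'm" where
  "inj1 X A = cpair X (czero X A A) (cid X A)"

definition ell :: "('o, 'm, 'z) clac_scheme \<Rightarrow> 'o \<Rightarrow> 'm" where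
  "ell X A = cpair X (ccmp X (cpr0 X A A) (inj0 X A)) (ccmp X (cpr1 X A A) (inj1 X A))"

definition cswap :: "('o, 'm, 'z) clac_scheme \<Rightarrow> 'o \<Rightarrow> 'm" where
  "cswap X A = (let E = Pob X A in
     cpair X
       (cpair X (ccmp X (cpr0 X E E) (cpr0 X A A)) (ccmp X (cpr1 X E E) (cpr0 X A A)))
       (cpair X (ccmp X (cpr0 X E E) (cpr1 X A A)) (ccmp X (cpr1 X E E) (cpr1 X A A))))"

section \<open>Cartesian differential categories\<close>

definition is_cdc :: "('o, 'm, 'z) clac_scheme \<Rightarrow> ('m \<Rightarrow> 'm) \<Rightarrow> bool" where
  "is_cdc X D \<longleftrightarrow> is_clac X \<and>
     (\<forall>A \<in> cOb X. \<forall>B \<in> cOb X. \<forall>f \<in> Hom X A B. D f \<in> Hom X (Pob X A) B) \<and>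
     \<comment> \<open>CD.1\<close>
     (\<forall>A \<in> cOb X. \<forall>B \<in> cOb X.
        (\<forall>f \<in> Hom X A B. \<forall>g \<in> Hom X A B. D (cadd X f g) = cadd X (D f) (D g)) \<and>
        D (czero X A B) = czero X (Pob X A) B) \<and>
     \<comment> \<open>CD.2\<close>
     (\<forall>A \<in> cOb X. \<forall>B \<in> cOb X. \<forall>f \<in> Hom X A B.
        ccmp X (one_times X A (cadd X (cpr0 X A A) (cpr1 X A A))) (D f) =
          cadd X (ccmp X (one_times X A (cpr0 X A A)) (D f))
                 (ccmp X (one_times X A (cpr1 X A A)) (D f)) \<and>
        ccmp X (inj0 X A) (D f) = czero X A B) \<and>
     \<comment> \<open>CD.3\<close>
     (\<forall>A \<in> cOb X. D (cid X A) = cpr1 X A A) \<and>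
     (\<forall>A \<in> cOb X. \<forall>B \<in> cOb X.
        D (cpr0 X A B) = ccmp X (cpr1 X (cprd X A B) (cprd X A B)) (cpr0 X A B) \<and>
        D (cpr1 X A B) = ccmp X (cpr1 X (cprd X A B) (cprd X A B)) (cpr1 X A B)) \<and>
     \<comment> \<open>CD.4\<close>
     (\<forall>A \<in> cOb X. \<forall>B \<in> cOb X. \<forall>C \<in> cOb X. \<forall>f \<in> Hom X C A. \<forall>g \<in> Hom X C B.
        D (cpair X f g) = cpair X (D f) (D g)) \<and>
     \<comment> \<open>CD.5\<close>
     (\<forall>A \<in> cOb X. \<forall>B \<in> cOb X. \<forall>C \<in> cOb X. \<forall>f \<in> Hom X A B. \<forall>g \<in> Hom X B C.
        D (ccmp X f g) = ccmp X (cpair X (ccmp X (cpr0 X A A) f) (D f)) (D g)) \<and>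
     \<comment> \<open>CD.6 and CD.7\<close>
     (\<forall>A \<in> cOb X. \<forall>B \<in> cOb X. \<forall>f \<in> Hom X A B.
        ccmp X (ell X A) (D (D f)) = D f \<and>
        ccmp X (cswap X A) (D (D f)) = D (D f))"

definition strict_cd_functor ::
  "('o, 'm, 'z) clac_scheme \<Rightarrow> ('p, 'n, 'y) clac_scheme \<Rightarrow> ('m \<Rightarrow> 'm) \<Rightarrow> ('n \<Rightarrow> 'n)
     \<Rightarrow> ('o \<Rightarrow> 'p) \<Rightarrow> ('m \<Rightarrow> 'n) \<Rightarrow> bool" where
  "strict_cd_functor X Y D D' Fo Fm \<longleftrightarrow> strict_cla_functor X Y Fo Fm \<and>
     (\<forall>f \<in> cArr X. Fm (D f) = D' (Fm f))"

section \<open>Pre-D-sequences and D-sequences\<close>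

text \<open>A (pre-)D-sequence is represented as f :: nat \<Rightarrow> 'm, f n : P^n(A) \<rightarrow> B.\<close>

definition dotL :: "('o, 'm, 'z) clac_scheme \<Rightarrow> 'm \<Rightarrow> (nat \<Rightarrow> 'm) \<Rightarrow> nat \<Rightarrow> 'm" where
  "dotL X h f = (\<lambda>n. ccmp X (Pnmap X n h) (f n))"

definition dotR :: "('o, 'm, 'z) clac_scheme \<Rightarrow> (nat \<Rightarrow> 'm) \<Rightarrow> 'm \<Rightarrow> nat \<Rightarrow> 'm" where
  "dotR X f k = (\<lambda>n. ccmp X (f n) k)"

definition Dseq_pow :: "nat \<Rightarrow> (nat \<Rightarrow> 'm) \<Rightarrow> nat \<Rightarrow> 'm" where
  "Dseq_pow k f = (\<lambda>n. f (n + k))"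

definition zero_seq :: "('o, 'm, 'z) clac_scheme \<Rightarrow> 'o \<Rightarrow> 'o \<Rightarrow> nat \<Rightarrow> 'm" where
  "zero_seq X A B = (\<lambda>n. czero X (Pnob X n A) B)"

definition add_seq :: "('o, 'm, 'z) clac_scheme \<Rightarrow> (nat \<Rightarrow> 'm) \<Rightarrow> (nat \<Rightarrow> 'm) \<Rightarrow> nat \<Rightarrow> 'm" where
  "add_seq X f g = (\<lambda>n. cadd X (f n) (g n))"

fun iseq :: "('o, 'm, 'z) clac_scheme \<Rightarrow> 'o \<Rightarrow> nat \<Rightarrow> 'm" where
  "iseq X A 0 = cid X A"
| "iseq X A (Suc n) = ccmp X (cpr1 X (Pnob X n A) (Pnob X n A)) (iseq X A n)"

definition Tan :: "('o, 'm, 'z) clac_scheme \<Rightarrow> (nat \<Rightarrow> 'm) \<Rightarrow> nat \<Rightarrow> 'm" where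
  "Tan X f = (let A = cdom X (f 0) in
     (\<lambda>n. cpair X (ccmp X (Pnmap X n (cpr0 X A A)) (f n)) (f (Suc n))))"

definition Tpow :: "('o, 'm, 'z) clac_scheme \<Rightarrow> nat \<Rightarrow> (nat \<Rightarrow> 'm) \<Rightarrow> nat \<Rightarrow> 'm" where
  "Tpow X k f = (Tan X ^^ k) f"

definition Dcmp :: "('o, 'm, 'z) clac_scheme \<Rightarrow> (nat \<Rightarrow> 'm) \<Rightarrow> (nat \<Rightarrow> 'm) \<Rightarrow> nat \<Rightarrow> 'm" where
  "Dcmp X f g = (\<lambda>n. ccmp X (Tpow X n f 0) (g n))"

definition is_Dseq :: "('o, 'm, 'z) clac_scheme \<Rightarrow> 'o \<Rightarrow> 'o \<Rightarrow> (nat \<Rightarrow> 'm) \<Rightarrow> bool" where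
  "is_Dseq X A B f \<longleftrightarrow>
     (\<forall>n. f n \<in> Hom X (Pnob X n A) B) \<and>
     (\<forall>n. let E = Pnob X n A; g = Dseq_pow (Suc n) f; g2 = Dseq_pow (Suc (Suc n)) f in
        \<comment> \<open>DS.1\<close>
        dotL X (inj0 X E) g = zero_seq X E B \<and>
        \<comment> \<open>DS.2\<close>
        dotL X (one_times X E (cadd X (cpr0 X E E) (cpr1 X E E))) g =
          add_seq X (dotL X (one_times X E (cpr0 X E E)) g)
                    (dotL X (one_times X E (cpr1 X E E)) g) \<and>
        \<comment> \<open>DS.3\<close>
        dotL X (ell X E) g2 = g \<and>
        \<comment> \<open>DS.4\<close>
        dotL X (cswap X E) g2 = g2)"

section \<open>The category \<D>[X]\<close>

definition Dcat :: "('o, 'm, 'z) clac_scheme \<Rightarrow> ('o, nat \<Rightarrow> 'm) clac" where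
  "Dcat X = \<lparr>
     cOb = cOb X,
     cArr = {f. is_Dseq X (cdom X (f 0)) (ccod X (f 0)) f},
     cdom = (\<lambda>f. cdom X (f 0)),
     ccod = (\<lambda>f. ccod X (f 0)),
     ccmp = Dcmp X,
     cid = iseq X,
     cprd = cprd X,
     ctrm = ctrm X,
     cpr0 = (\<lambda>A B. dotR X (iseq X (cprd X A B)) (cpr0 X A B)),
     cpr1 = (\<lambda>A B. dotR X (iseq X (cprd X A B)) (cpr1 X A B)),
     cpair = (\<lambda>f g n. cpair X (f n) (g n)),
     cadd = add_seq X,
     czero = zero_seq X \<rparr>"

text \<open>Comonad structure: \<epsilon>(f) = f_0, \<delta>(f) = (f, D[f], D^2[f], ...),
  \<D>[F](f)_n = F(f_n).\<close>

definition eps :: "(nat \<Rightarrow> 'm) \<Rightarrow> 'm" where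
  "eps f = f 0"

definition delta :: "(nat \<Rightarrow> 'm) \<Rightarrow> nat \<Rightarrow> nat \<Rightarrow> 'm" where
  "delta f = (\<lambda>k. Dseq_pow k f)"

definition Dmap :: "('m \<Rightarrow> 'n) \<Rightarrow> (nat \<Rightarrow> 'm) \<Rightarrow> nat \<Rightarrow> 'n" where
  "Dmap Fm f = (\<lambda>n. Fm (f n))"

section \<open>Coalgebras\<close>

text \<open>(X, \<omega>) with \<omega> = (wo, wm) : X \<rightarrow> \<D>[X] strict Cartesian left additive,
  \<omega>\<epsilon> = 1 and \<omega>\<delta> = \<omega>\<D>[\<omega>] (both as functors, i.e. on objects and arrows;
  \<epsilon> and \<delta> are the identity on objects and \<D>[\<omega>] acts as wo on objects).\<close>

definition is_coalgebra :: "('o, 'm, 'z) clac_scheme \<Rightarrow> ('o \<Rightarrow> 'o) \<Rightarrow> ('m \<Rightarrow> nat \<Rightarrow> 'm) \<Rightarrow> bool" where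
  "is_coalgebra X wo wm \<longleftrightarrow>
     strict_cla_functor X (Dcat X) wo wm \<and>
     (\<forall>A \<in> cOb X. wo A = A) \<and>
     (\<forall>f \<in> cArr X. eps (wm f) = f) \<and>
     (\<forall>A \<in> cOb X. wo A = wo (wo A)) \<and>
     (\<forall>f \<in> cArr X. delta (wm f) = Dmap wm (wm f))"

definition coalg_morphism ::
  "('o, 'm, 'z) clac_scheme \<Rightarrow> ('p, 'n, 'y) clac_scheme \<Rightarrow>
   ('o \<Rightarrow> 'o) \<Rightarrow> ('m \<Rightarrow> nat \<Rightarrow> 'm) \<Rightarrow> ('p \<Rightarrow> 'p) \<Rightarrow> ('n \<Rightarrow> nat \<Rightarrow> 'n) \<Rightarrow>
   ('o \<Rightarrow> 'p) \<Rightarrow> ('m \<Rightarrow> 'n) \<Rightarrow> bool" where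
  "coalg_morphism X Y wo wm wo' wm' Fo Fm \<longleftrightarrow>
     strict_cla_functor X Y Fo Fm \<and>
     (\<forall>A \<in> cOb X. wo' (Fo A) = Fo (wo A)) \<and>
     (\<forall>f \<in> cArr X. wm' (Fm f) = Dmap Fm (wm f))"

definition omegaD :: "('m \<Rightarrow> 'm) \<Rightarrow> 'm \<Rightarrow> nat \<Rightarrow> 'm" where
  "omegaD D f = (\<lambda>n. (D ^^ n) f)"

definition Domega :: "('m \<Rightarrow> nat \<Rightarrow> 'm) \<Rightarrow> 'm \<Rightarrow> 'm" where
  "Domega wm f = wm f 1"

end

theory Submission
  imports Defs
begin


locale clacL =
  fixes X :: "('o,'m,'z) clac_scheme"
  assumes clac: "is_clac X"
begin

lemma cat: "is_category X" using clac by (simp add: is_clac_def)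
lemma fp: "has_finite_products X" using clac by (simp add: is_clac_def)
lemma la: "is_left_additive X" using clac by (simp add: is_clac_def)

lemma Hom_obs: "f \<in> Hom X A B \<Longrightarrow> A \<in> cOb X \<and> B \<in> cOb X"
  using cat unfolding is_category_def Hom_def by auto
lemma Hom_ob1: "f \<in> Hom X A B \<Longrightarrow> A \<in> cOb X" using Hom_obs by blast
lemma Hom_ob2: "f \<in> Hom X A B \<Longrightarrow> B \<in> cOb X" using Hom_obs by blast
lemma Hom_dom: "f \<in> Hom X A B \<Longrightarrow> cdom X f = A" by (simp add: Hom_def)
lemma Hom_cod: "f \<in> Hom X A B \<Longrightarrow> ccod X f = B" by (simp add: Hom_def)
lemma arr_Hom: "f \<in> cArr X \<Longrightarrow> f \<in> Hom X (cdom X f) (ccod X f)" by (simp add: Hom_def)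
lemma id_Hom: "A \<in> cOb X \<Longrightarrow> cid X A \<in> Hom X A A"
  using cat unfolding is_category_def by auto
lemma comp_Hom: "f \<in> Hom X A B \<Longrightarrow> g \<in> Hom X B C \<Longrightarrow> ccmp X f g \<in> Hom X A C"
  using cat Hom_obs unfolding is_category_def by metis
lemma assoc: "f \<in> Hom X A B \<Longrightarrow> g \<in> Hom X B C \<Longrightarrow> h \<in> Hom X C E \<Longrightarrow>
   ccmp X (ccmp X f g) h = ccmp X f (ccmp X g h)"
  using cat Hom_obs unfolding is_category_def by metis
lemma id_left: "f \<in> Hom X A B \<Longrightarrow> ccmp X (cid X A) f = f"
  using cat Hom_obs unfolding is_category_def by metis
lemma id_right: "f \<in> Hom X A B \<Longrightarrow> ccmp X f (cid X B) = f"
  using cat Hom_obs unfolding is_category_def by metis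

lemma prd_ob: "A \<in> cOb X \<Longrightarrow> B \<in> cOb X \<Longrightarrow> cprd X A B \<in> cOb X"
  using fp unfolding has_finite_products_def by auto
lemma pr0_Hom: "A \<in> cOb X \<Longrightarrow> B \<in> cOb X \<Longrightarrow> cpr0 X A B \<in> Hom X (cprd X A B) A"
  using fp unfolding has_finite_products_def by auto
lemma pr1_Hom: "A \<in> cOb X \<Longrightarrow> B \<in> cOb X \<Longrightarrow> cpr1 X A B \<in> Hom X (cprd X A B) B"
  using fp unfolding has_finite_products_def by auto
lemma pair_Hom: "f \<in> Hom X C A \<Longrightarrow> g \<in> Hom X C B \<Longrightarrow> cpair X f g \<in> Hom X C (cprd X A B)"
  using fp Hom_obs unfolding has_finite_products_def by metis
lemma pair_pr0: "f \<in> Hom X C A \<Longrightarrow> g \<in> Hom X C B \<Longrightarrow> ccmp X (cpair X f g) (cpr0 X A B) = f"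
  using fp Hom_obs unfolding has_finite_products_def by metis
lemma pair_pr1: "f \<in> Hom X C A \<Longrightarrow> g \<in> Hom X C B \<Longrightarrow> ccmp X (cpair X f g) (cpr1 X A B) = g"
  using fp Hom_obs unfolding has_finite_products_def by metis
lemma pair_eta: "h \<in> Hom X C (cprd X A B) \<Longrightarrow> A \<in> cOb X \<Longrightarrow> B \<in> cOb X \<Longrightarrow>
   h = cpair X (ccmp X h (cpr0 X A B)) (ccmp X h (cpr1 X A B))"
  using fp Hom_obs unfolding has_finite_products_def by metis
lemma pair_unique: "h \<in> Hom X C (cprd X A B) \<Longrightarrow> A \<in> cOb X \<Longrightarrow> B \<in> cOb X \<Longrightarrow>
   ccmp X h (cpr0 X A B) = f \<Longrightarrow> ccmp X h (cpr1 X A B) = g \<Longrightarrow> h = cpair X f g"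
  using pair_eta by blast
lemma pair_nat: "k \<in> Hom X C' C \<Longrightarrow> f \<in> Hom X C A \<Longrightarrow> g \<in> Hom X C B \<Longrightarrow>
   ccmp X k (cpair X f g) = cpair X (ccmp X k f) (ccmp X k g)"
proof -
  assume k: "k \<in> Hom X C' C" and f: "f \<in> Hom X C A" and g: "g \<in> Hom X C B"
  have A: "A \<in> cOb X" and B: "B \<in> cOb X" using f g Hom_obs by auto
  show ?thesis
    apply (rule pair_unique[OF comp_Hom[OF k pair_Hom[OF f g]] A B])
    using assoc[OF k pair_Hom[OF f g] pr0_Hom[OF A B]] assoc[OF k pair_Hom[OF f g] pr1_Hom[OF A B]]
      pair_pr0[OF f g] pair_pr1[OF f g] by auto
qed

lemma zero_Hom: "A \<in> cOb X \<Longrightarrow> B \<in> cOb X \<Longrightarrow> czero X A B \<in> Hom X A B"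
  using la unfolding is_left_additive_def by auto
lemma add_Hom: "f \<in> Hom X A B \<Longrightarrow> g \<in> Hom X A B \<Longrightarrow> cadd X f g \<in> Hom X A B"
  using la Hom_obs unfolding is_left_additive_def by metis
lemma add_comm: "f \<in> Hom X A B \<Longrightarrow> g \<in> Hom X A B \<Longrightarrow> cadd X f g = cadd X g f"
  using la Hom_obs unfolding is_left_additive_def by metis
lemma add_assoc: "f \<in> Hom X A B \<Longrightarrow> g \<in> Hom X A B \<Longrightarrow> h \<in> Hom X A B \<Longrightarrow>
   cadd X (cadd X f g) h = cadd X f (cadd X g h)"
  using la Hom_obs unfolding is_left_additive_def by metis
lemma add_zero: "f \<in> Hom X A B \<Longrightarrow> cadd X f (czero X A B) = f"
  using la Hom_obs unfolding is_left_additive_def by metis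
lemma comp_add: "k \<in> Hom X C A \<Longrightarrow> f \<in> Hom X A B \<Longrightarrow> g \<in> Hom X A B \<Longrightarrow>
   ccmp X k (cadd X f g) = cadd X (ccmp X k f) (ccmp X k g)"
  using la Hom_obs unfolding is_left_additive_def by metis
lemma comp_zero: "k \<in> Hom X C A \<Longrightarrow> B \<in> cOb X \<Longrightarrow> ccmp X k (czero X A B) = czero X C B"
  using la Hom_obs unfolding is_left_additive_def by metis

lemmas homI = id_Hom comp_Hom prd_ob pr0_Hom pr1_Hom pair_Hom zero_Hom add_Hom

end



context clacL begin

lemma Pob_ob: "A \<in> cOb X \<Longrightarrow> Pob X A \<in> cOb X" by (simp add: Pob_def prd_ob)
lemma Pnob_0[simp]: "Pnob X 0 A = A" by (simp add: Pnob_def)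
lemma Pnob_Suc: "Pnob X (Suc n) A = Pob X (Pnob X n A)" by (simp add: Pnob_def)
lemma Pnob_Suc': "Pnob X (Suc n) A = Pnob X n (Pob X A)" by (simp add: Pnob_def funpow_Suc_right del: funpow.simps)
lemma Pnob_ob: "A \<in> cOb X \<Longrightarrow> Pnob X n A \<in> cOb X"
  by (induct n) (auto simp: Pnob_Suc Pob_ob)
lemma Pnob_add: "Pnob X m (Pnob X n A) = Pnob X (m + n) A"
  by (simp add: Pnob_def funpow_add)

lemma Pmap_Hom: "h \<in> Hom X E F \<Longrightarrow> Pmap X h \<in> Hom X (Pob X E) (Pob X F)"
  unfolding Pmap_def Let_def Pob_def Hom_dom[of h E F]
  using Hom_obs[of h E F] by (blast intro: pair_Hom comp_Hom pr0_Hom pr1_Hom)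
lemma Pnmap_0[simp]: "Pnmap X 0 h = h" by (simp add: Pnmap_def)
lemma Pnmap_Suc': "Pnmap X (Suc n) h = Pnmap X n (Pmap X h)"
  by (simp add: Pnmap_def funpow_Suc_right del: funpow.simps)
lemma Pnmap_Hom: "h \<in> Hom X E F \<Longrightarrow> Pnmap X n h \<in> Hom X (Pnob X n E) (Pnob X n F)"
  by (induct n arbitrary: h E F) (auto simp: Pnmap_Suc' Pnob_Suc' Pmap_Hom)

lemma one_times_Hom: "E \<in> cOb X \<Longrightarrow> k \<in> Hom X (Pob X E) E \<Longrightarrow>
   one_times X E k \<in> Hom X (cprd X E (Pob X E)) (Pob X E)"
  unfolding one_times_def Pob_def
  by (blast intro: pair_Hom comp_Hom pr0_Hom pr1_Hom prd_ob)
lemma inj0_Hom: "E \<in> cOb X \<Longrightarrow> inj0 X E \<in> Hom X E (Pob X E)"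
  unfolding inj0_def Pob_def by (simp add: pair_Hom id_Hom zero_Hom)
lemma inj1_Hom: "E \<in> cOb X \<Longrightarrow> inj1 X E \<in> Hom X E (Pob X E)"
  unfolding inj1_def Pob_def by (simp add: pair_Hom id_Hom zero_Hom)
lemma ell_Hom: "E \<in> cOb X \<Longrightarrow> ell X E \<in> Hom X (Pob X E) (Pob X (Pob X E))"
  using inj0_Hom[of E] inj1_Hom[of E] unfolding ell_def Pob_def
  by (blast intro: pair_Hom comp_Hom pr0_Hom pr1_Hom prd_ob)
lemma cswap_Hom: "E \<in> cOb X \<Longrightarrow> cswap X E \<in> Hom X (Pob X (Pob X E)) (Pob X (Pob X E))"
  unfolding cswap_def Let_def Pob_def
  by (blast intro: pair_Hom comp_Hom pr0_Hom pr1_Hom prd_ob)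

end

locale cdcL =
  fixes X :: "('o,'m,'z) clac_scheme" and D :: "'m \<Rightarrow> 'm"
  assumes cdc: "is_cdc X D"

sublocale cdcL \<subseteq> clacL
  using cdc by unfold_locales (simp add: is_cdc_def)

context cdcL begin


lemma cdcs1: "\<forall>A \<in> cOb X. \<forall>B \<in> cOb X. \<forall>f \<in> Hom X A B. D f \<in> Hom X (Pob X A) B"
  using cdc unfolding is_cdc_def by (elim conjE) assumption
lemma cdcs2: "\<forall>A \<in> cOb X. \<forall>B \<in> cOb X.
        (\<forall>f \<in> Hom X A B. \<forall>g \<in> Hom X A B. D (cadd X f g) = cadd X (D f) (D g)) \<and>
        D (czero X A B) = czero X (Pob X A) B"
  using cdc unfolding is_cdc_def by (elim conjE) assumption
lemma cdcs3: "\<forall>A \<in> cOb X. \<forall>B \<in> cOb X. \<forall>f \<in> Hom X A B.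
        ccmp X (one_times X A (cadd X (cpr0 X A A) (cpr1 X A A))) (D f) =
          cadd X (ccmp X (one_times X A (cpr0 X A A)) (D f))
                 (ccmp X (one_times X A (cpr1 X A A)) (D f)) \<and>
        ccmp X (inj0 X A) (D f) = czero X A B"
  using cdc unfolding is_cdc_def by (elim conjE) assumption
lemma cdcs4: "\<forall>A \<in> cOb X. D (cid X A) = cpr1 X A A"
  using cdc unfolding is_cdc_def by (elim conjE) assumption
lemma cdcs5: "\<forall>A \<in> cOb X. \<forall>B \<in> cOb X.
        D (cpr0 X A B) = ccmp X (cpr1 X (cprd X A B) (cprd X A B)) (cpr0 X A B) \<and>
        D (cpr1 X A B) = ccmp X (cpr1 X (cprd X A B) (cprd X A B)) (cpr1 X A B)"
  using cdc unfolding is_cdc_def by (elim conjE) assumption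
lemma cdcs6: "\<forall>A \<in> cOb X. \<forall>B \<in> cOb X. \<forall>C \<in> cOb X. \<forall>f \<in> Hom X C A. \<forall>g \<in> Hom X C B.
        D (cpair X f g) = cpair X (D f) (D g)"
  using cdc unfolding is_cdc_def by (elim conjE) assumption
lemma cdcs7: "\<forall>A \<in> cOb X. \<forall>B \<in> cOb X. \<forall>C \<in> cOb X. \<forall>f \<in> Hom X A B. \<forall>g \<in> Hom X B C.
        D (ccmp X f g) = ccmp X (cpair X (ccmp X (cpr0 X A A) f) (D f)) (D g)"
  using cdc unfolding is_cdc_def by (elim conjE) assumption
lemma cdcs8: "\<forall>A \<in> cOb X. \<forall>B \<in> cOb X. \<forall>f \<in> Hom X A B.
        ccmp X (ell X A) (D (D f)) = D f \<and>
        ccmp X (cswap X A) (D (D f)) = D (D f)"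
  using cdc unfolding is_cdc_def by (elim conjE) assumption


lemma D_Hom: "f \<in> Hom X A B \<Longrightarrow> D f \<in> Hom X (Pob X A) B"
  using cdcs1 Hom_obs by blast
lemma D_add: "f \<in> Hom X A B \<Longrightarrow> g \<in> Hom X A B \<Longrightarrow> D (cadd X f g) = cadd X (D f) (D g)"
  using cdcs2 Hom_obs by blast
lemma D_zero: "A \<in> cOb X \<Longrightarrow> B \<in> cOb X \<Longrightarrow> D (czero X A B) = czero X (Pob X A) B"
  using cdcs2 by blast
lemma CD2a: "f \<in> Hom X A B \<Longrightarrow> ccmp X (one_times X A (cadd X (cpr0 X A A) (cpr1 X A A))) (D f) =
          cadd X (ccmp X (one_times X A (cpr0 X A A)) (D f))
                 (ccmp X (one_times X A (cpr1 X A A)) (D f))"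
  using cdcs3 Hom_obs by blast
lemma CD2b: "f \<in> Hom X A B \<Longrightarrow> ccmp X (inj0 X A) (D f) = czero X A B"
  using cdcs3 Hom_obs by blast
lemma D_id: "A \<in> cOb X \<Longrightarrow> D (cid X A) = cpr1 X A A"
  using cdcs4 by blast
lemma D_pr0: "A \<in> cOb X \<Longrightarrow> B \<in> cOb X \<Longrightarrow> D (cpr0 X A B) = ccmp X (cpr1 X (cprd X A B) (cprd X A B)) (cpr0 X A B)"
  using cdcs5 by blast
lemma D_pr1: "A \<in> cOb X \<Longrightarrow> B \<in> cOb X \<Longrightarrow> D (cpr1 X A B) = ccmp X (cpr1 X (cprd X A B) (cprd X A B)) (cpr1 X A B)"
  using cdcs5 by blast
lemma D_pair: "f \<in> Hom X C A \<Longrightarrow> g \<in> Hom X C B \<Longrightarrow> D (cpair X f g) = cpair X (D f) (D g)"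
  using cdcs6 Hom_obs by blast
lemma D_comp: "f \<in> Hom X A B \<Longrightarrow> g \<in> Hom X B C \<Longrightarrow>
   D (ccmp X f g) = ccmp X (cpair X (ccmp X (cpr0 X A A) f) (D f)) (D g)"
  using cdcs7 Hom_obs by blast
lemma CD6: "f \<in> Hom X A B \<Longrightarrow> ccmp X (ell X A) (D (D f)) = D f"
  using cdcs8 Hom_obs by blast
lemma CD7: "f \<in> Hom X A B \<Longrightarrow> ccmp X (cswap X A) (D (D f)) = D (D f)"
  using cdcs8 Hom_obs by blast

lemma Dn_Hom: "f \<in> Hom X A B \<Longrightarrow> (D ^^ n) f \<in> Hom X (Pnob X n A) B"
  by (induct n) (auto simp: Pnob_Suc D_Hom)

definition lin :: "'m \<Rightarrow> 'o \<Rightarrow> 'o \<Rightarrow> bool" where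
  "lin h E F \<longleftrightarrow> h \<in> Hom X E F \<and> D h = ccmp X (cpr1 X E E) h"


lemma lin_Hom: "lin h E F \<Longrightarrow> h \<in> Hom X E F" by (simp add: lin_def)
lemma lin_D: "lin h E F \<Longrightarrow> D h = ccmp X (cpr1 X E E) h" by (simp add: lin_def)

lemma lin_pr0: "A \<in> cOb X \<Longrightarrow> B \<in> cOb X \<Longrightarrow> lin (cpr0 X A B) (cprd X A B) A"
  by (simp add: lin_def D_pr0 pr0_Hom)
lemma lin_pr1: "A \<in> cOb X \<Longrightarrow> B \<in> cOb X \<Longrightarrow> lin (cpr1 X A B) (cprd X A B) B"
  by (simp add: lin_def D_pr1 pr1_Hom)
lemma lin_id: "A \<in> cOb X \<Longrightarrow> lin (cid X A) A A"
  using id_right[OF pr1_Hom[of A A]] by (simp add: lin_def D_id id_Hom)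
lemma lin_zero: "A \<in> cOb X \<Longrightarrow> B \<in> cOb X \<Longrightarrow> lin (czero X A B) A B"
  using comp_zero[OF pr1_Hom[of A A]] by (simp add: lin_def D_zero zero_Hom Pob_def)

lemma D_comp_linL: assumes h: "lin h E F" and g: "g \<in> Hom X F C"
  shows "D (ccmp X h g) = ccmp X (Pmap X h) (D g)"
proof -
  have hh: "h \<in> Hom X E F" using h lin_Hom by blast
  show ?thesis using D_comp[OF hh g] lin_D[OF h] Hom_dom[OF hh]
    by (simp add: Pmap_def Let_def)
qed

lemma D_comp_linR: assumes h: "h \<in> Hom X A E" and g: "lin g E F"
  shows "D (ccmp X h g) = ccmp X (D h) g"
proof -
  have gg: "g \<in> Hom X E F" using g lin_Hom by blast
  have A: "A \<in> cOb X" and E: "E \<in> cOb X" using h Hom_obs by auto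
  have p: "cpair X (ccmp X (cpr0 X A A) h) (D h) \<in> Hom X (cprd X A A) (cprd X E E)"
    using A h D_Hom[OF h] by (auto simp: Pob_def intro!: pair_Hom comp_Hom[OF pr0_Hom])
  have "D (ccmp X h g) = ccmp X (cpair X (ccmp X (cpr0 X A A) h) (D h)) (ccmp X (cpr1 X E E) g)"
    using D_comp[OF h gg] lin_D[OF g] by simp
  also have "\<dots> = ccmp X (ccmp X (cpair X (ccmp X (cpr0 X A A) h) (D h)) (cpr1 X E E)) g"
    using assoc[OF p pr1_Hom[OF E E] gg] by simp
  also have "\<dots> = ccmp X (D h) g"
    using pair_pr1[OF comp_Hom[OF pr0_Hom[OF A A] h] D_Hom[OF h, unfolded Pob_def]] by simp
  finally show ?thesis .
qed

lemma lin_comp: assumes h: "lin h E F" and k: "lin k F G" shows "lin (ccmp X h k) E G"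
proof -
  have hh: "h \<in> Hom X E F" using h lin_Hom by blast
  have E: "E \<in> cOb X" using hh Hom_obs by auto
  have "D (ccmp X h k) = ccmp X (D h) k" using D_comp_linR[OF hh k] .
  also have "\<dots> = ccmp X (cpr1 X E E) (ccmp X h k)"
    using lin_D[OF h] assoc[OF pr1_Hom[OF E E] hh lin_Hom[OF k]] by simp
  finally show ?thesis using comp_Hom[OF hh lin_Hom[OF k]] by (simp add: lin_def)
qed

lemma lin_pair: assumes h: "lin h E F" and k: "lin k E G" shows "lin (cpair X h k) E (cprd X F G)"
proof -
  have hh: "h \<in> Hom X E F" and kk: "k \<in> Hom X E G" using h k lin_Hom by blast+
  have E: "E \<in> cOb X" using hh Hom_obs by auto
  show ?thesis unfolding lin_def
    using D_pair[OF hh kk] lin_D[OF h] lin_D[OF k] pair_nat[OF pr1_Hom[OF E E] hh kk] pair_Hom[OF hh kk]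
    by simp
qed

lemma lin_add: assumes h: "lin h E F" and k: "lin k E F" shows "lin (cadd X h k) E F"
proof -
  have hh: "h \<in> Hom X E F" and kk: "k \<in> Hom X E F" using h k lin_Hom by blast+
  have E: "E \<in> cOb X" using hh Hom_obs by auto
  show ?thesis unfolding lin_def
    using D_add[OF hh kk] lin_D[OF h] lin_D[OF k] comp_add[OF pr1_Hom[OF E E] hh kk] add_Hom[OF hh kk]
    by simp
qed

lemma lin_Pmap: assumes h: "lin h E F" shows "lin (Pmap X h) (Pob X E) (Pob X F)"
proof -
  have hh: "h \<in> Hom X E F" using h lin_Hom by blast
  have E: "E \<in> cOb X" using hh Hom_obs by auto
  show ?thesis unfolding Pmap_def Let_def Hom_dom[OF hh] Pob_def
    by (intro lin_pair lin_comp[OF lin_pr0[OF E E] h] lin_comp[OF lin_pr1[OF E E] h])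
qed

lemma lin_inj0: "E \<in> cOb X \<Longrightarrow> lin (inj0 X E) E (Pob X E)"
  unfolding inj0_def Pob_def by (intro lin_pair lin_id lin_zero)
lemma lin_inj1: "E \<in> cOb X \<Longrightarrow> lin (inj1 X E) E (Pob X E)"
  unfolding inj1_def Pob_def by (intro lin_pair lin_id lin_zero)
lemma lin_one_times: "E \<in> cOb X \<Longrightarrow> lin k (Pob X E) E \<Longrightarrow> lin (one_times X E k) (cprd X E (Pob X E)) (Pob X E)"
  unfolding one_times_def
  by (subst (3) Pob_def, intro lin_pair lin_pr0 lin_comp[OF lin_pr1] Pob_ob)
lemma lin_ell: "E \<in> cOb X \<Longrightarrow> lin (ell X E) (Pob X E) (Pob X (Pob X E))"
  unfolding ell_def Pob_def
  by (intro lin_pair lin_comp[OF lin_pr0] lin_comp[OF lin_pr1] lin_inj0[unfolded Pob_def] lin_inj1[unfolded Pob_def] prd_ob)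
lemma lin_cswap: "E \<in> cOb X \<Longrightarrow> lin (cswap X E) (Pob X (Pob X E)) (Pob X (Pob X E))"
  unfolding cswap_def Let_def Pob_def
  by (intro lin_pair lin_comp[OF lin_pr0] lin_comp[OF lin_pr1] lin_pr0 lin_pr1 prd_ob)


lemma Dn_Suc': "(D ^^ Suc n) f = (D ^^ n) (D f)"
  by (simp add: funpow_Suc_right del: funpow.simps)

lemma Dn_comp_linL: "lin h E F \<Longrightarrow> g \<in> Hom X F C \<Longrightarrow>
    (D ^^ n) (ccmp X h g) = ccmp X (Pnmap X n h) ((D ^^ n) g)"
proof (induct n arbitrary: h g E F C)
  case 0 show ?case by simp
next
  case (Suc n)
  have "(D ^^ Suc n) (ccmp X h g) = (D ^^ n) (ccmp X (Pmap X h) (D g))"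
    using D_comp_linL[OF Suc.prems] by (simp add: Dn_Suc' del: funpow.simps)
  also have "\<dots> = ccmp X (Pnmap X n (Pmap X h)) ((D ^^ n) (D g))"
    using Suc.hyps[OF lin_Pmap[OF Suc.prems(1)] D_Hom[OF Suc.prems(2)]] .
  finally show ?case by (simp add: Pnmap_Suc' Dn_Suc' del: funpow.simps)
qed

lemma Dn_comp_linR: "h \<in> Hom X A E \<Longrightarrow> lin g E F \<Longrightarrow>
    (D ^^ n) (ccmp X h g) = ccmp X ((D ^^ n) h) g"
  by (induct n) (auto simp: D_comp_linR[OF Dn_Hom])

lemma Dn_pair: "f \<in> Hom X C A \<Longrightarrow> g \<in> Hom X C B \<Longrightarrow>
    (D ^^ n) (cpair X f g) = cpair X ((D ^^ n) f) ((D ^^ n) g)"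
  by (induct n) (auto simp: D_pair[OF Dn_Hom Dn_Hom])

lemma Dn_add: "f \<in> Hom X A B \<Longrightarrow> g \<in> Hom X A B \<Longrightarrow>
    (D ^^ n) (cadd X f g) = cadd X ((D ^^ n) f) ((D ^^ n) g)"
  by (induct n) (auto simp: D_add[OF Dn_Hom Dn_Hom])

lemma Dn_zero: "A \<in> cOb X \<Longrightarrow> B \<in> cOb X \<Longrightarrow> (D ^^ n) (czero X A B) = czero X (Pnob X n A) B"
  by (induct n) (auto simp: D_zero Pnob_Suc Pnob_ob)

lemma iseq_lin: "A \<in> cOb X \<Longrightarrow> lin (iseq X A n) (Pnob X n A) A"
proof (induct n)
  case 0 then show ?case by (simp add: lin_id)
next
  case (Suc n)
  have "lin (ccmp X (cpr1 X (Pnob X n A) (Pnob X n A)) (iseq X A n)) (cprd X (Pnob X n A) (Pnob X n A)) A"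
    by (rule lin_comp[OF lin_pr1 Suc(1)[OF Suc(2)]]) (use Suc(2) Pnob_ob in auto)
  then show ?case by (simp add: Pnob_Suc Pob_def)
qed

lemma Dn_id: "A \<in> cOb X \<Longrightarrow> (D ^^ n) (cid X A) = iseq X A n"
proof (induct n)
  case 0 then show ?case by simp
next
  case (Suc n) then show ?case using lin_D[OF iseq_lin[OF Suc(2), of n]] by simp
qed

definition TD :: "'m \<Rightarrow> 'm" where
  "TD h = cpair X (ccmp X (cpr0 X (cdom X h) (cdom X h)) h) (D h)"

lemma TD_Hom: assumes h: "h \<in> Hom X A B" shows "TD h \<in> Hom X (Pob X A) (Pob X B)"
proof -
  have A: "A \<in> cOb X" using h Hom_obs by auto
  show ?thesis unfolding TD_def Hom_dom[OF h] using D_Hom[OF h]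
    by (auto simp: Pob_def intro!: pair_Hom comp_Hom[OF pr0_Hom[OF A A] h])
qed

lemma TDn_Hom: "h \<in> Hom X A B \<Longrightarrow> (TD ^^ n) h \<in> Hom X (Pnob X n A) (Pnob X n B)"
  by (induct n) (auto simp: Pnob_Suc TD_Hom)

lemma D_comp_TD: "f \<in> Hom X A B \<Longrightarrow> g \<in> Hom X B C \<Longrightarrow> D (ccmp X f g) = ccmp X (TD f) (D g)"
  by (simp add: D_comp TD_def Hom_dom)

lemma Dn_comp: "f \<in> Hom X A B \<Longrightarrow> g \<in> Hom X B C \<Longrightarrow>
   (D ^^ n) (ccmp X f g) = ccmp X ((TD ^^ n) f) ((D ^^ n) g)"
proof (induct n arbitrary: f g A B C)
  case 0 then show ?case by simp
next
  case (Suc n)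
  have "(D ^^ Suc n) (ccmp X f g) = (D ^^ n) (ccmp X (TD f) (D g))"
    using D_comp_TD[OF Suc.prems] by (simp add: Dn_Suc' del: funpow.simps)
  also have "\<dots> = ccmp X ((TD ^^ n) (TD f)) ((D ^^ n) (D g))"
    using Suc.hyps[OF TD_Hom[OF Suc.prems(1)] D_Hom[OF Suc.prems(2)]] .
  finally show ?case by (simp add: Dn_Suc' funpow_Suc_right del: funpow.simps)
qed

lemma omegaD_0[simp]: "omegaD D h 0 = h" by (simp add: omegaD_def)

lemma Tan_omega: assumes h: "h \<in> Hom X A B" shows "Tan X (omegaD D h) = omegaD D (TD h)"
proof
  fix n
  have A: "A \<in> cOb X" using h Hom_obs by auto
  have p0: "ccmp X (cpr0 X A A) h \<in> Hom X (cprd X A A) B" using comp_Hom[OF pr0_Hom[OF A A] h] .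
  have "(D ^^ n) (TD h) = cpair X ((D ^^ n) (ccmp X (cpr0 X A A) h)) ((D ^^ n) (D h))"
    unfolding TD_def Hom_dom[OF h] using Dn_pair[OF p0 D_Hom[OF h, unfolded Pob_def]] .
  also have "\<dots> = cpair X (ccmp X (Pnmap X n (cpr0 X A A)) ((D ^^ n) h)) ((D ^^ Suc n) h)"
    using Dn_comp_linL[OF lin_pr0[OF A A] h] by (simp add: Dn_Suc' del: funpow.simps)
  finally show "Tan X (omegaD D h) n = omegaD D (TD h) n"
    by (simp add: Tan_def omegaD_def Hom_dom[OF h])
qed

lemma Tpow_omega: "h \<in> Hom X A B \<Longrightarrow> Tpow X n (omegaD D h) = omegaD D ((TD ^^ n) h)"
proof (induct n arbitrary: h A B)
  case 0 then show ?case by (simp add: Tpow_def)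
next
  case (Suc n)
  have "Tpow X (Suc n) (omegaD D h) = Tpow X n (Tan X (omegaD D h))"
    by (simp add: Tpow_def funpow_Suc_right del: funpow.simps)
  also have "\<dots> = omegaD D ((TD ^^ n) (TD h))"
    using Tan_omega[OF Suc.prems] Suc.hyps[OF TD_Hom[OF Suc.prems]] by simp
  finally show ?case by (simp add: funpow_Suc_right del: funpow.simps)
qed

lemma Dseq_pow_omega: "Dseq_pow k (omegaD D f) = omegaD D ((D ^^ k) f)"
  by (rule ext) (simp add: Dseq_pow_def omegaD_def funpow_add)


lemma lin_k0: "E \<in> cOb X \<Longrightarrow> lin (cadd X (cpr0 X E E) (cpr1 X E E)) (Pob X E) E"
  unfolding Pob_def by (intro lin_add lin_pr0 lin_pr1)
lemma lin_k1: "E \<in> cOb X \<Longrightarrow> lin (cpr0 X E E) (Pob X E) E"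
  unfolding Pob_def by (intro lin_pr0)
lemma lin_k2: "E \<in> cOb X \<Longrightarrow> lin (cpr1 X E E) (Pob X E) E"
  unfolding Pob_def by (intro lin_pr1)

lemma DS1: assumes G: "G \<in> Hom X E B"
  shows "dotL X (inj0 X E) (omegaD D (D G)) = zero_seq X E B"
proof
  fix m
  have E: "E \<in> cOb X" and B: "B \<in> cOb X" using G Hom_obs by auto
  have "(D ^^ m) (ccmp X (inj0 X E) (D G)) = ccmp X (Pnmap X m (inj0 X E)) ((D ^^ m) (D G))"
    using Dn_comp_linL[OF lin_inj0[OF E] D_Hom[OF G]] .
  moreover have "(D ^^ m) (ccmp X (inj0 X E) (D G)) = czero X (Pnob X m E) B"
    using CD2b[OF G] Dn_zero[OF E B] by simp
  ultimately show "dotL X (inj0 X E) (omegaD D (D G)) m = zero_seq X E B m"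
    by (simp add: dotL_def omegaD_def zero_seq_def)
qed

lemma DS2: assumes G: "G \<in> Hom X E B"
  shows "dotL X (one_times X E (cadd X (cpr0 X E E) (cpr1 X E E))) (omegaD D (D G)) =
     add_seq X (dotL X (one_times X E (cpr0 X E E)) (omegaD D (D G)))
               (dotL X (one_times X E (cpr1 X E E)) (omegaD D (D G)))"
proof
  fix m
  have E: "E \<in> cOb X" and B: "B \<in> cOb X" using G Hom_obs by auto
  note l0 = lin_one_times[OF E lin_k0[OF E]]
  note l1 = lin_one_times[OF E lin_k1[OF E]]
  note l2 = lin_one_times[OF E lin_k2[OF E]]
  note DG = D_Hom[OF G]
  have "ccmp X (Pnmap X m (one_times X E (cadd X (cpr0 X E E) (cpr1 X E E)))) ((D ^^ m) (D G))
     = (D ^^ m) (ccmp X (one_times X E (cadd X (cpr0 X E E) (cpr1 X E E))) (D G))"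
    using Dn_comp_linL[OF l0 DG] by simp
  also have "\<dots> = (D ^^ m) (cadd X (ccmp X (one_times X E (cpr0 X E E)) (D G))
                 (ccmp X (one_times X E (cpr1 X E E)) (D G)))"
    using CD2a[OF G] by simp
  also have "\<dots> = cadd X ((D ^^ m) (ccmp X (one_times X E (cpr0 X E E)) (D G)))
                 ((D ^^ m) (ccmp X (one_times X E (cpr1 X E E)) (D G)))"
    using Dn_add[OF comp_Hom[OF lin_Hom[OF l1] DG] comp_Hom[OF lin_Hom[OF l2] DG]] .
  also have "\<dots> = cadd X (ccmp X (Pnmap X m (one_times X E (cpr0 X E E))) ((D ^^ m) (D G)))
                 (ccmp X (Pnmap X m (one_times X E (cpr1 X E E))) ((D ^^ m) (D G)))"
    using Dn_comp_linL[OF l1 DG] Dn_comp_linL[OF l2 DG] by simp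
  finally show "dotL X (one_times X E (cadd X (cpr0 X E E) (cpr1 X E E))) (omegaD D (D G)) m =
     add_seq X (dotL X (one_times X E (cpr0 X E E)) (omegaD D (D G)))
               (dotL X (one_times X E (cpr1 X E E)) (omegaD D (D G))) m"
    by (simp add: dotL_def omegaD_def add_seq_def)
qed

lemma DS3: assumes G: "G \<in> Hom X E B"
  shows "dotL X (ell X E) (omegaD D (D (D G))) = omegaD D (D G)"
proof
  fix m
  have E: "E \<in> cOb X" using G Hom_obs by auto
  have "(D ^^ m) (ccmp X (ell X E) (D (D G))) = ccmp X (Pnmap X m (ell X E)) ((D ^^ m) (D (D G)))"
    using Dn_comp_linL[OF lin_ell[OF E] D_Hom[OF D_Hom[OF G]]] .
  then show "dotL X (ell X E) (omegaD D (D (D G))) m = omegaD D (D G) m"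
    using CD6[OF G] by (simp add: dotL_def omegaD_def)
qed

lemma DS4: assumes G: "G \<in> Hom X E B"
  shows "dotL X (cswap X E) (omegaD D (D (D G))) = omegaD D (D (D G))"
proof
  fix m
  have E: "E \<in> cOb X" using G Hom_obs by auto
  have "(D ^^ m) (ccmp X (cswap X E) (D (D G))) = ccmp X (Pnmap X m (cswap X E)) ((D ^^ m) (D (D G)))"
    using Dn_comp_linL[OF lin_cswap[OF E] D_Hom[OF D_Hom[OF G]]] .
  then show "dotL X (cswap X E) (omegaD D (D (D G))) m = omegaD D (D (D G)) m"
    using CD7[OF G] by (simp add: dotL_def omegaD_def)
qed

lemma omega_Dseq: assumes f: "f \<in> Hom X A B" shows "is_Dseq X A B (omegaD D f)"
  unfolding is_Dseq_def Let_def Dseq_pow_omega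
  using Dn_Hom[OF f] DS1[OF Dn_Hom[OF f]] DS2[OF Dn_Hom[OF f]] DS3[OF Dn_Hom[OF f]] DS4[OF Dn_Hom[OF f]]
  by (simp add: omegaD_def)

end

lemma Dcat_sel[simp]:
  "cOb (Dcat X) = cOb X"
  "cArr (Dcat X) = {f. is_Dseq X (cdom X (f 0)) (ccod X (f 0)) f}"
  "cdom (Dcat X) f = cdom X (f 0)"
  "ccod (Dcat X) f = ccod X (f 0)"
  "ccmp (Dcat X) = Dcmp X"
  "cid (Dcat X) = iseq X"
  "cprd (Dcat X) = cprd X"
  "ctrm (Dcat X) = ctrm X"
  "cpr0 (Dcat X) A B = dotR X (iseq X (cprd X A B)) (cpr0 X A B)"
  "cpr1 (Dcat X) A B = dotR X (iseq X (cprd X A B)) (cpr1 X A B)"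
  "cpair (Dcat X) f g = (\<lambda>n. cpair X (f n) (g n))"
  "cadd (Dcat X) = add_seq X"
  "czero (Dcat X) = zero_seq X"
  by (simp_all add: Dcat_def)

lemma Hom_Dcat: "f \<in> Hom (Dcat X) A B \<longleftrightarrow> is_Dseq X A B f \<and> cdom X (f 0) = A \<and> ccod X (f 0) = B"
  by (auto simp: Hom_def)

context cdcL begin

lemma F2: "f \<in> Hom X A B \<Longrightarrow> omegaD D f \<in> Hom (Dcat X) A B"
  by (simp add: Hom_Dcat omega_Dseq Hom_dom Hom_cod)
lemma F3: "A \<in> cOb X \<Longrightarrow> omegaD D (cid X A) = iseq X A"
  by (rule ext) (simp add: omegaD_def Dn_id)
lemma F4: "f \<in> Hom X A B \<Longrightarrow> g \<in> Hom X B C \<Longrightarrow>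
   omegaD D (ccmp X f g) = Dcmp X (omegaD D f) (omegaD D g)"
  by (rule ext) (simp add: Dcmp_def Tpow_omega Dn_comp, simp add: omegaD_def Dn_comp)
lemma F6a: "A \<in> cOb X \<Longrightarrow> B \<in> cOb X \<Longrightarrow> omegaD D (cpr0 X A B) = dotR X (iseq X (cprd X A B)) (cpr0 X A B)"
proof
  fix n assume A: "A \<in> cOb X" and B: "B \<in> cOb X"
  have "(D ^^ n) (ccmp X (cid X (cprd X A B)) (cpr0 X A B)) = ccmp X ((D ^^ n) (cid X (cprd X A B))) (cpr0 X A B)"
    using Dn_comp_linR[OF id_Hom[OF prd_ob[OF A B]] lin_pr0[OF A B]] .
  then show "omegaD D (cpr0 X A B) n = dotR X (iseq X (cprd X A B)) (cpr0 X A B) n"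
    using id_left[OF pr0_Hom[OF A B]] Dn_id[OF prd_ob[OF A B]] by (simp add: omegaD_def dotR_def)
qed
lemma F6b: "A \<in> cOb X \<Longrightarrow> B \<in> cOb X \<Longrightarrow> omegaD D (cpr1 X A B) = dotR X (iseq X (cprd X A B)) (cpr1 X A B)"
proof
  fix n assume A: "A \<in> cOb X" and B: "B \<in> cOb X"
  have "(D ^^ n) (ccmp X (cid X (cprd X A B)) (cpr1 X A B)) = ccmp X ((D ^^ n) (cid X (cprd X A B))) (cpr1 X A B)"
    using Dn_comp_linR[OF id_Hom[OF prd_ob[OF A B]] lin_pr1[OF A B]] .
  then show "omegaD D (cpr1 X A B) n = dotR X (iseq X (cprd X A B)) (cpr1 X A B) n"
    using id_left[OF pr1_Hom[OF A B]] Dn_id[OF prd_ob[OF A B]] by (simp add: omegaD_def dotR_def)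
qed
lemma F6c: "A \<in> cOb X \<Longrightarrow> B \<in> cOb X \<Longrightarrow> omegaD D (czero X A B) = zero_seq X A B"
  by (rule ext) (simp add: omegaD_def zero_seq_def Dn_zero)
lemma F6d: "f \<in> Hom X A B \<Longrightarrow> g \<in> Hom X A B \<Longrightarrow> omegaD D (cadd X f g) = add_seq X (omegaD D f) (omegaD D g)"
  by (rule ext) (simp add: omegaD_def add_seq_def Dn_add)

lemma omega_functor: "strict_cla_functor X (Dcat X) id (omegaD D)"
  unfolding strict_cla_functor_def
  by (auto simp: F2 F3 F4 F6a F6b F6c F6d)

lemma omega_coalg: "is_coalgebra X id (omegaD D)"
  unfolding is_coalgebra_def
  by (auto simp: omega_functor eps_def delta_def Dmap_def Dseq_pow_omega)
    (auto simp: omegaD_def funpow_add intro!: ext)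

end



lemma scf1: "strict_cla_functor X Y Fo Fm \<Longrightarrow> (\<forall>A \<in> cOb X. Fo A \<in> cOb Y)"
  unfolding strict_cla_functor_def by (elim conjE) assumption
lemma scf2: "strict_cla_functor X Y Fo Fm \<Longrightarrow> (\<forall>A \<in> cOb X. \<forall>B \<in> cOb X. \<forall>f \<in> Hom X A B. Fm f \<in> Hom Y (Fo A) (Fo B))"
  unfolding strict_cla_functor_def by (elim conjE) assumption
lemma scf3: "strict_cla_functor X Y Fo Fm \<Longrightarrow> (\<forall>A \<in> cOb X. Fm (cid X A) = cid Y (Fo A))"
  unfolding strict_cla_functor_def by (elim conjE) assumption
lemma scf4: "strict_cla_functor X Y Fo Fm \<Longrightarrow> (\<forall>A \<in> cOb X. \<forall>B \<in> cOb X. \<forall>C \<in> cOb X. \<forall>f \<in> Hom X A B. \<forall>g \<in> Hom X B C.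
        Fm (ccmp X f g) = ccmp Y (Fm f) (Fm g))"
  unfolding strict_cla_functor_def by (elim conjE) assumption
lemma scf6: "strict_cla_functor X Y Fo Fm \<Longrightarrow> (\<forall>A \<in> cOb X. \<forall>B \<in> cOb X.
        Fo (cprd X A B) = cprd Y (Fo A) (Fo B) \<and>
        Fm (cpr0 X A B) = cpr0 Y (Fo A) (Fo B) \<and>
        Fm (cpr1 X A B) = cpr1 Y (Fo A) (Fo B) \<and>
        Fm (czero X A B) = czero Y (Fo A) (Fo B) \<and>
        (\<forall>f \<in> Hom X A B. \<forall>g \<in> Hom X A B. Fm (cadd X f g) = cadd Y (Fm f) (Fm g)))"
  unfolding strict_cla_functor_def by (elim conjE) assumption

lemma Dseq0:
  assumes "is_Dseq X A B g"
  shows "ccmp X (inj0 X A) (g 1) = czero X A B"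
    "ccmp X (one_times X A (cadd X (cpr0 X A A) (cpr1 X A A))) (g 1) =
       cadd X (ccmp X (one_times X A (cpr0 X A A)) (g 1)) (ccmp X (one_times X A (cpr1 X A A)) (g 1))"
    "ccmp X (ell X A) (g 2) = g 1"
    "ccmp X (cswap X A) (g 2) = g 2"
proof -
  have "\<forall>n. let E = Pnob X n A; g1 = Dseq_pow (Suc n) g; g2 = Dseq_pow (Suc (Suc n)) g in
        dotL X (inj0 X E) g1 = zero_seq X E B \<and>
        dotL X (one_times X E (cadd X (cpr0 X E E) (cpr1 X E E))) g1 =
          add_seq X (dotL X (one_times X E (cpr0 X E E)) g1)
                    (dotL X (one_times X E (cpr1 X E E)) g1) \<and>
        dotL X (ell X E) g2 = g1 \<and>
        dotL X (cswap X E) g2 = g2"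
    using assms unfolding is_Dseq_def by blast
  then have h: "dotL X (inj0 X A) (Dseq_pow 1 g) = zero_seq X A B \<and>
        dotL X (one_times X A (cadd X (cpr0 X A A) (cpr1 X A A))) (Dseq_pow 1 g) =
          add_seq X (dotL X (one_times X A (cpr0 X A A)) (Dseq_pow 1 g))
                    (dotL X (one_times X A (cpr1 X A A)) (Dseq_pow 1 g)) \<and>
        dotL X (ell X A) (Dseq_pow 2 g) = Dseq_pow 1 g \<and>
        dotL X (cswap X A) (Dseq_pow 2 g) = Dseq_pow 2 g"
    by (drule_tac x=0 in spec) (simp add: Let_def Pnob_def numeral_2_eq_2)
  from h have h1: "dotL X (inj0 X A) (Dseq_pow 1 g) 0 = zero_seq X A B 0" by simp
  from h have h2: "dotL X (one_times X A (cadd X (cpr0 X A A) (cpr1 X A A))) (Dseq_pow 1 g) 0 =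
          add_seq X (dotL X (one_times X A (cpr0 X A A)) (Dseq_pow 1 g))
                    (dotL X (one_times X A (cpr1 X A A)) (Dseq_pow 1 g)) 0" by simp
  from h have h3: "dotL X (ell X A) (Dseq_pow 2 g) 0 = Dseq_pow 1 g 0" by simp
  from h have h4: "dotL X (cswap X A) (Dseq_pow 2 g) 0 = Dseq_pow 2 g 0" by simp
  show "ccmp X (inj0 X A) (g 1) = czero X A B"
    using h1 by (simp add: dotL_def Dseq_pow_def zero_seq_def Pnmap_def Pnob_def)
  show "ccmp X (one_times X A (cadd X (cpr0 X A A) (cpr1 X A A))) (g 1) =
       cadd X (ccmp X (one_times X A (cpr0 X A A)) (g 1)) (ccmp X (one_times X A (cpr1 X A A)) (g 1))"
    using h2 by (simp add: dotL_def Dseq_pow_def add_seq_def Pnmap_def)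
  show "ccmp X (ell X A) (g 2) = g 1"
    using h3 by (simp add: dotL_def Dseq_pow_def Pnmap_def numeral_2_eq_2)
  show "ccmp X (cswap X A) (g 2) = g 2"
    using h4 by (simp add: dotL_def Dseq_pow_def Pnmap_def numeral_2_eq_2)
qed

locale coalgL = clacL X for X :: "('o,'m,'z) clac_scheme" +
  fixes wo :: "'o \<Rightarrow> 'o" and wm :: "'m \<Rightarrow> nat \<Rightarrow> 'm"
  assumes coal: "is_coalgebra X wo wm"
begin

lemma coal_p1: "strict_cla_functor X (Dcat X) wo wm"
  using coal unfolding is_coalgebra_def by (elim conjE) assumption
lemma coal_p2: "\<forall>A \<in> cOb X. wo A = A"
  using coal unfolding is_coalgebra_def by (elim conjE) assumption
lemma coal_p3: "\<forall>f \<in> cArr X. eps (wm f) = f"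
  using coal unfolding is_coalgebra_def by (elim conjE) assumption
lemma coal_p4: "\<forall>f \<in> cArr X. delta (wm f) = Dmap wm (wm f)"
  using coal unfolding is_coalgebra_def by (elim conjE) assumption
lemmas coal_parts = coal_p1 coal_p2 coal_p3 coal_p4

lemma wo_id: "A \<in> cOb X \<Longrightarrow> wo A = A"
  using coal_parts(2) by blast
lemma eps_wm: "f \<in> cArr X \<Longrightarrow> wm f 0 = f"
  using coal_parts(3) unfolding eps_def by blast
lemma delta_wm: "f \<in> cArr X \<Longrightarrow> delta (wm f) = Dmap wm (wm f)"
  using coal_parts(4) by blast
lemma func: "strict_cla_functor X (Dcat X) wo wm"
  by (rule coal_parts(1))

lemma Hom_arr: "f \<in> Hom X A B \<Longrightarrow> f \<in> cArr X" by (simp add: Hom_def)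

lemma wm_Hom: "f \<in> Hom X A B \<Longrightarrow> wm f \<in> Hom (Dcat X) A B"
proof -
  assume f: "f \<in> Hom X A B"
  have A: "A \<in> cOb X" and B: "B \<in> cOb X" using Hom_obs[OF f] by auto
  have "wm f \<in> Hom (Dcat X) (wo A) (wo B)" using scf2[OF func] A B f by blast
  then show ?thesis using wo_id[OF A] wo_id[OF B] by simp
qed
lemma wm_Dseq: "f \<in> Hom X A B \<Longrightarrow> is_Dseq X A B (wm f)"
  using wm_Hom[unfolded Hom_Dcat] by blast
lemma wm_n_Hom: "f \<in> Hom X A B \<Longrightarrow> wm f n \<in> Hom X (Pnob X n A) B"
proof -
  assume f: "f \<in> Hom X A B"
  have "\<forall>n. wm f n \<in> Hom X (Pnob X n A) B"
    using wm_Dseq[OF f] unfolding is_Dseq_def by (elim conjE) assumption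
  then show ?thesis by blast
qed
lemma wm_1_Hom: "f \<in> Hom X A B \<Longrightarrow> wm f 1 \<in> Hom X (Pob X A) B"
  using wm_n_Hom[of f A B 1] by (simp add: Pnob_def)
lemma wm_id: "A \<in> cOb X \<Longrightarrow> wm (cid X A) = iseq X A"
  using scf3[OF func] wo_id[of A] by simp
lemma wm_comp: "f \<in> Hom X A B \<Longrightarrow> g \<in> Hom X B C \<Longrightarrow> wm (ccmp X f g) = Dcmp X (wm f) (wm g)"
  using scf4[OF func, unfolded Dcat_sel] Hom_obs[of f A B] Hom_obs[of g B C] by blast
lemma wm_pr0: "A \<in> cOb X \<Longrightarrow> B \<in> cOb X \<Longrightarrow> wm (cpr0 X A B) = dotR X (iseq X (cprd X A B)) (cpr0 X A B)"
  using scf6[OF func] wo_id[of A] wo_id[of B] by simp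
lemma wm_pr1: "A \<in> cOb X \<Longrightarrow> B \<in> cOb X \<Longrightarrow> wm (cpr1 X A B) = dotR X (iseq X (cprd X A B)) (cpr1 X A B)"
  using scf6[OF func] wo_id[of A] wo_id[of B] by simp
lemma wm_zero: "A \<in> cOb X \<Longrightarrow> B \<in> cOb X \<Longrightarrow> wm (czero X A B) = zero_seq X A B"
  using scf6[OF func] wo_id[of A] wo_id[of B] by simp
lemma wm_add: "f \<in> Hom X A B \<Longrightarrow> g \<in> Hom X A B \<Longrightarrow> wm (cadd X f g) = add_seq X (wm f) (wm g)"
  using scf6[OF func, unfolded Dcat_sel] Hom_obs[of f A B] by blast

lemma wm_shift: "f \<in> cArr X \<Longrightarrow> wm f (n + k) = wm (wm f k) n"
  using fun_cong[OF fun_cong[OF delta_wm[of f], of k], of n] by (simp add: delta_def Dmap_def Dseq_pow_def)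

lemma wm_wm: "f \<in> Hom X A B \<Longrightarrow> wm (wm f 1) 1 = wm f 2"
  using wm_shift[OF Hom_arr, of f A B 1 1] by (simp add: numeral_2_eq_2)

lemma omega_Domega: "f \<in> cArr X \<Longrightarrow> omegaD (Domega wm) f = wm f"
proof
  fix n assume f: "f \<in> cArr X"
  show "omegaD (Domega wm) f n = wm f n"
  proof (induct n)
    case 0 then show ?case using eps_wm[OF f] by (simp add: omegaD_def)
  next
    case (Suc n)
    have fh: "f \<in> Hom X (cdom X f) (ccod X f)" using f arr_Hom by blast
    have "wm f n \<in> cArr X" using wm_n_Hom[OF fh] Hom_arr by blast
    then show ?case using Suc wm_shift[OF f, of 1 n]
      by (simp add: omegaD_def Domega_def)
  qed
qed


lemma c2a: "f \<in> Hom X A B \<Longrightarrow> g \<in> Hom X A B \<Longrightarrow> wm (cadd X f g) 1 = cadd X (wm f 1) (wm g 1)"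
  by (simp add: wm_add add_seq_def)
lemma c2b: "A \<in> cOb X \<Longrightarrow> B \<in> cOb X \<Longrightarrow> wm (czero X A B) 1 = czero X (Pob X A) B"
  by (simp add: wm_zero zero_seq_def Pnob_def)
lemma c4: "A \<in> cOb X \<Longrightarrow> wm (cid X A) 1 = cpr1 X A A"
  using id_right[OF pr1_Hom[of A A]] by (simp add: wm_id)
lemma c5a: "A \<in> cOb X \<Longrightarrow> B \<in> cOb X \<Longrightarrow> wm (cpr0 X A B) 1 = ccmp X (cpr1 X (cprd X A B) (cprd X A B)) (cpr0 X A B)"
  using id_right[OF pr1_Hom[of "cprd X A B" "cprd X A B"]] prd_ob[of A B] by (simp add: wm_pr0 dotR_def)
lemma c5b: "A \<in> cOb X \<Longrightarrow> B \<in> cOb X \<Longrightarrow> wm (cpr1 X A B) 1 = ccmp X (cpr1 X (cprd X A B) (cprd X A B)) (cpr1 X A B)"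
  using id_right[OF pr1_Hom[of "cprd X A B" "cprd X A B"]] prd_ob[of A B] by (simp add: wm_pr1 dotR_def)
lemma c7: "f \<in> Hom X A B \<Longrightarrow> g \<in> Hom X B C \<Longrightarrow>
   wm (ccmp X f g) 1 = ccmp X (cpair X (ccmp X (cpr0 X A A) f) (wm f 1)) (wm g 1)"
  using eps_wm[OF Hom_arr, of f A B]
  by (simp add: wm_comp Dcmp_def Tpow_def Tan_def Hom_dom)

lemma c7proj: assumes p: "p \<in> Hom X C E" and k: "k \<in> Hom X E F" and kk: "wm k 1 = ccmp X (cpr1 X E E) k"
  shows "wm (ccmp X p k) 1 = ccmp X (wm p 1) k"
proof -
  have C: "C \<in> cOb X" and E: "E \<in> cOb X" using p Hom_obs by auto
  have q: "cpair X (ccmp X (cpr0 X C C) p) (wm p 1) \<in> Hom X (cprd X C C) (cprd X E E)"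
    using pair_Hom[OF comp_Hom[OF pr0_Hom[OF C C] p] wm_1_Hom[OF p, unfolded Pob_def]] .
  have "wm (ccmp X p k) 1 = ccmp X (cpair X (ccmp X (cpr0 X C C) p) (wm p 1)) (ccmp X (cpr1 X E E) k)"
    using c7[OF p k] kk by simp
  also have "\<dots> = ccmp X (ccmp X (cpair X (ccmp X (cpr0 X C C) p) (wm p 1)) (cpr1 X E E)) k"
    using assoc[OF q pr1_Hom[OF E E] k] by simp
  also have "\<dots> = ccmp X (wm p 1) k"
    using pair_pr1[OF comp_Hom[OF pr0_Hom[OF C C] p] wm_1_Hom[OF p, unfolded Pob_def]] by simp
  finally show ?thesis .
qed

lemma c6: assumes f: "f \<in> Hom X C A" and g: "g \<in> Hom X C B"
  shows "wm (cpair X f g) 1 = cpair X (wm f 1) (wm g 1)"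
proof -
  have A: "A \<in> cOb X" and B: "B \<in> cOb X" using f g Hom_obs by auto
  note p = pair_Hom[OF f g]
  have "wm (ccmp X (cpair X f g) (cpr0 X A B)) 1 = ccmp X (wm (cpair X f g) 1) (cpr0 X A B)"
    using c7proj[OF p pr0_Hom[OF A B] c5a[OF A B]] .
  then have 0: "ccmp X (wm (cpair X f g) 1) (cpr0 X A B) = wm f 1" using pair_pr0[OF f g] by simp
  have "wm (ccmp X (cpair X f g) (cpr1 X A B)) 1 = ccmp X (wm (cpair X f g) 1) (cpr1 X A B)"
    using c7proj[OF p pr1_Hom[OF A B] c5b[OF A B]] .
  then have 1: "ccmp X (wm (cpair X f g) 1) (cpr1 X A B) = wm g 1" using pair_pr1[OF f g] by simp
  show ?thesis by (rule pair_unique[OF wm_1_Hom[OF p] A B 0 1])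
qed

lemma coal_cdc: "is_cdc X (Domega wm)"
  unfolding is_cdc_def Domega_def
proof (intro conjI)
  show "is_clac X" by (rule clac)
  show "\<forall>A\<in>cOb X. \<forall>B\<in>cOb X. \<forall>f\<in>Hom X A B. wm f 1 \<in> Hom X (Pob X A) B"
    using wm_1_Hom by blast
  show "\<forall>A\<in>cOb X. \<forall>B\<in>cOb X. (\<forall>f\<in>Hom X A B. \<forall>g\<in>Hom X A B. wm (cadd X f g) 1 = cadd X (wm f 1) (wm g 1)) \<and>
            wm (czero X A B) 1 = czero X (Pob X A) B"
    using c2a c2b by blast
  show "\<forall>A\<in>cOb X. \<forall>B\<in>cOb X. \<forall>f\<in>Hom X A B.
       ccmp X (one_times X A (cadd X (cpr0 X A A) (cpr1 X A A))) (wm f 1) =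
       cadd X (ccmp X (one_times X A (cpr0 X A A)) (wm f 1)) (ccmp X (one_times X A (cpr1 X A A)) (wm f 1)) \<and>
       ccmp X (inj0 X A) (wm f 1) = czero X A B"
    using Dseq0(1,2)[OF wm_Dseq] by blast
  show "\<forall>A\<in>cOb X. wm (cid X A) 1 = cpr1 X A A" using c4 by blast
  show "\<forall>A\<in>cOb X. \<forall>B\<in>cOb X.
       wm (cpr0 X A B) 1 = ccmp X (cpr1 X (cprd X A B) (cprd X A B)) (cpr0 X A B) \<and>
       wm (cpr1 X A B) 1 = ccmp X (cpr1 X (cprd X A B) (cprd X A B)) (cpr1 X A B)"
    using c5a c5b by blast
  show "\<forall>A\<in>cOb X. \<forall>B\<in>cOb X. \<forall>C\<in>cOb X. \<forall>f\<in>Hom X C A. \<forall>g\<in>Hom X C B.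
       wm (cpair X f g) 1 = cpair X (wm f 1) (wm g 1)"
    using c6 by blast
  show "\<forall>A\<in>cOb X. \<forall>B\<in>cOb X. \<forall>C\<in>cOb X. \<forall>f\<in>Hom X A B. \<forall>g\<in>Hom X B C.
       wm (ccmp X f g) 1 = ccmp X (cpair X (ccmp X (cpr0 X A A) f) (wm f 1)) (wm g 1)"
    using c7 by blast
  show "\<forall>A\<in>cOb X. \<forall>B\<in>cOb X. \<forall>f\<in>Hom X A B.
       ccmp X (ell X A) (wm (wm f 1) 1) = wm f 1 \<and> ccmp X (cswap X A) (wm (wm f 1) 1) = wm (wm f 1) 1"
    using Dseq0(3,4)[OF wm_Dseq] wm_wm by simp
qed

end


lemma coalgLI: "is_clac X \<Longrightarrow> is_coalgebra X wo wm \<Longrightarrow> coalgL X wo wm"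
  by (simp add: coalgL_def coalgL_axioms_def clacL_def)
lemma cdcLI: "is_cdc X D \<Longrightarrow> cdcL X D"
  by (simp add: cdcL_def)

lemma iter_commute:
  assumes c: "\<forall>f\<in>S. Fm (D f) = D' (Fm f)" and cl: "\<forall>f\<in>S. D f \<in> S" and f: "f \<in> S"
  shows "(D' ^^ n) (Fm f) = Fm ((D ^^ n) f)"
proof -
  have "(D ^^ n) f \<in> S \<and> (D' ^^ n) (Fm f) = Fm ((D ^^ n) f)"
    by (induct n) (use f c cl in auto)
  then show ?thesis by blast
qed

theorem theorem4p21:
  fixes X :: "('o, 'm) clac" and Y :: "('p, 'n) clac"
  assumes "is_clac X" and "is_clac Y"
  shows
    "(\<forall>D. is_cdc X D \<longrightarrow> is_coalgebra X id (omegaD D)) \<and>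
     (\<forall>wo wm. is_coalgebra X wo wm \<longrightarrow> is_cdc X (Domega wm)) \<and>
     (\<forall>D. is_cdc X D \<longrightarrow> (\<forall>f \<in> cArr X. Domega (omegaD D) f = D f)) \<and>
     (\<forall>wo wm. is_coalgebra X wo wm \<longrightarrow>
        (\<forall>A \<in> cOb X. id A = wo A) \<and> (\<forall>f \<in> cArr X. omegaD (Domega wm) f = wm f)) \<and>
     (\<forall>D D' Fo Fm. is_cdc X D \<longrightarrow> is_cdc Y D' \<longrightarrow>
        (coalg_morphism X Y id (omegaD D) id (omegaD D') Fo Fm \<longleftrightarrow>
         strict_cd_functor X Y D D' Fo Fm)) \<and>
     (\<forall>wo wm wo' wm' Fo Fm. is_coalgebra X wo wm \<longrightarrow> is_coalgebra Y wo' wm' \<longrightarrow>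
        (coalg_morphism X Y wo wm wo' wm' Fo Fm \<longleftrightarrow>
         strict_cd_functor X Y (Domega wm) (Domega wm') Fo Fm))"
proof (intro conjI allI impI)
  fix D assume "is_cdc X D"
  then show "is_coalgebra X id (omegaD D)" using cdcL.omega_coalg cdcLI by blast
next
  fix wo wm assume "is_coalgebra X wo wm"
  then show "is_cdc X (Domega wm)" using coalgL.coal_cdc coalgLI assms(1) by blast
next
  fix D assume "is_cdc X D"
  show "\<forall>f \<in> cArr X. Domega (omegaD D) f = D f" by (simp add: Domega_def omegaD_def)
next
  fix wo wm assume "is_coalgebra X wo wm"
  then have L: "coalgL X wo wm" using coalgLI assms(1) by blast
  show "\<forall>A \<in> cOb X. id A = wo A" using coalgL.wo_id[OF L] by simp
  show "\<forall>f \<in> cArr X. omegaD (Domega wm) f = wm f" using coalgL.omega_Domega[OF L] by blast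
next
  fix D D' Fo Fm assume cX: "is_cdc X D" and cY: "is_cdc Y D'"
  interpret LX: cdcL X D by (rule cdcLI[OF cX])
  interpret LY: cdcL Y D' by (rule cdcLI[OF cY])
  show "coalg_morphism X Y id (omegaD D) id (omegaD D') Fo Fm \<longleftrightarrow> strict_cd_functor X Y D D' Fo Fm"
  proof
    assume m: "coalg_morphism X Y id (omegaD D) id (omegaD D') Fo Fm"
    have "\<forall>f \<in> cArr X. omegaD D' (Fm f) = Dmap Fm (omegaD D f)"
      using m unfolding coalg_morphism_def by blast
    then have "\<forall>f \<in> cArr X. Fm (D f) = D' (Fm f)"
      by (auto simp: omegaD_def Dmap_def fun_eq_iff dest!: bspec dest: spec[of _ 1])
    then show "strict_cd_functor X Y D D' Fo Fm"
      using m unfolding coalg_morphism_def strict_cd_functor_def by blast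
  next
    assume s: "strict_cd_functor X Y D D' Fo Fm"
    have c: "\<forall>f \<in> cArr X. Fm (D f) = D' (Fm f)" using s unfolding strict_cd_functor_def by blast
    have cl: "\<forall>f \<in> cArr X. D f \<in> cArr X"
      using LX.D_Hom LX.arr_Hom by (auto simp: Hom_def)
    have "\<forall>f \<in> cArr X. omegaD D' (Fm f) = Dmap Fm (omegaD D f)"
      using iter_commute[OF c cl] by (auto simp: omegaD_def Dmap_def)
    then show "coalg_morphism X Y id (omegaD D) id (omegaD D') Fo Fm"
      using s unfolding coalg_morphism_def strict_cd_functor_def by simp
  qed
next
  fix wo wm wo' wm' Fo Fm assume cX: "is_coalgebra X wo wm" and cY: "is_coalgebra Y wo' wm'"
  interpret LX: coalgL X wo wm by (rule coalgLI[OF assms(1) cX])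
  interpret LY: coalgL Y wo' wm' by (rule coalgLI[OF assms(2) cY])
  show "coalg_morphism X Y wo wm wo' wm' Fo Fm \<longleftrightarrow> strict_cd_functor X Y (Domega wm) (Domega wm') Fo Fm"
  proof
    assume m: "coalg_morphism X Y wo wm wo' wm' Fo Fm"
    have "\<forall>f \<in> cArr X. wm' (Fm f) = Dmap Fm (wm f)"
      using m unfolding coalg_morphism_def by blast
    then have "\<forall>f \<in> cArr X. Fm (Domega wm f) = Domega wm' (Fm f)"
      by (auto simp: Domega_def Dmap_def)
    then show "strict_cd_functor X Y (Domega wm) (Domega wm') Fo Fm"
      using m unfolding coalg_morphism_def strict_cd_functor_def by blast
  next
    assume s: "strict_cd_functor X Y (Domega wm) (Domega wm') Fo Fm"
    have F: "strict_cla_functor X Y Fo Fm" using s unfolding strict_cd_functor_def by blast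
    have c: "\<forall>f \<in> cArr X. Fm (Domega wm f) = Domega wm' (Fm f)" using s unfolding strict_cd_functor_def by blast
    have cl: "\<forall>f \<in> cArr X. Domega wm f \<in> cArr X"
      using LX.wm_1_Hom LX.arr_Hom by (auto simp: Hom_def Domega_def)
    have Farr: "Fm f \<in> cArr Y" if f: "f \<in> cArr X" for f
    proof -
      have fh: "f \<in> Hom X (cdom X f) (ccod X f)" using f LX.arr_Hom by blast
      have "Fm f \<in> Hom Y (Fo (cdom X f)) (Fo (ccod X f))"
        using scf2[OF F] fh LX.Hom_obs[OF fh] by blast
      then show ?thesis by (simp add: Hom_def)
    qed
    have "\<forall>f \<in> cArr X. wm' (Fm f) = Dmap Fm (wm f)"
    proof
      fix f assume f: "f \<in> cArr X"
      have "wm' (Fm f) = omegaD (Domega wm') (Fm f)" using LY.omega_Domega[OF Farr[OF f]] by simp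
      also have "\<dots> = Dmap Fm (omegaD (Domega wm) f)"
        using iter_commute[OF c cl f] by (auto simp: omegaD_def Dmap_def)
      also have "\<dots> = Dmap Fm (wm f)" using LX.omega_Domega[OF f] by simp
      finally show "wm' (Fm f) = Dmap Fm (wm f)" .
    qed
    moreover have "\<forall>A \<in> cOb X. wo' (Fo A) = Fo (wo A)"
      using scf1[OF F] LX.wo_id LY.wo_id by simp
    ultimately show "coalg_morphism X Y wo wm wo' wm' Fo Fm"
      using F unfolding coalg_morphism_def by blast
  qed
qed

end
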